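(* Let $G$ and $H$ be graphs, each with at least $2$ vertices. The lexicographic product $G[H]$ is $1$-perfectly orientable if and only if one of the following holds: (i) $G$ is edgeless and $H$ is $1$-perfectly orientable; (ii) $G$ is $1$-perfectly orientable and $H$ is complete; (iii) every connected component of $G$ is complete and $H$ is a co-bipartite $1$-perfectly orientable graph.
   Context: All graphs are finite and simple. An orientation of a graph $G$ is $1$-perfect if the out-neighborhood of every vertex induces a clique in $G$; $G$ is $1$-perfectly orientable if it admits a $1$-perfect orientation. The lexicographic product $G[H]$ has vertex set $V(G)\times V(H)$, with distinct $(u,v),(u',v')$ adjacent iff either $uu'\in E(G)$, or $u=u'$ and $vv'\in E(H)$. A graph is co-bipartite if its complement is bipartite. *)

theory Defs
  imports Main
begin

type_synonym 'a graph = "'a set \<times> 'a set set"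

definition verts :: "'a graph \<Rightarrow> 'a set" where "verts G = fst G"
definition edges :: "'a graph \<Rightarrow> 'a set set" where "edges G = snd G"

definition graph :: "'a graph \<Rightarrow> bool" where
  "graph G \<longleftrightarrow> finite (verts G) \<and>
     (\<forall>e\<in>edges G. \<exists>u v. e = {u, v} \<and> u \<noteq> v \<and> u \<in> verts G \<and> v \<in> verts G)"

definition adj :: "'a graph \<Rightarrow> 'a \<Rightarrow> 'a \<Rightarrow> bool" where
  "adj G u v \<longleftrightarrow> {u, v} \<in> edges G \<and> u \<noteq> v"

definition clique :: "'a graph \<Rightarrow> 'a set \<Rightarrow> bool" where
  "clique G S \<longleftrightarrow> S \<subseteq> verts G \<and> (\<forall>u\<in>S. \<forall>v\<in>S. u \<noteq> v \<longrightarrow> adj G u v)"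

definition orientation :: "'a graph \<Rightarrow> ('a \<times> 'a) set \<Rightarrow> bool" where
  "orientation G D \<longleftrightarrow>
     (\<forall>(u, v)\<in>D. adj G u v) \<and>
     (\<forall>u v. adj G u v \<longrightarrow> ((u, v) \<in> D \<longleftrightarrow> (v, u) \<notin> D))"

definition out_nbhd :: "('a \<times> 'a) set \<Rightarrow> 'a \<Rightarrow> 'a set" where
  "out_nbhd D u = {v. (u, v) \<in> D}"

definition one_perfect_orientation :: "'a graph \<Rightarrow> ('a \<times> 'a) set \<Rightarrow> bool" where
  "one_perfect_orientation G D \<longleftrightarrow> orientation G D \<and>
     (\<forall>u\<in>verts G. clique G (out_nbhd D u))"

definition one_perfectly_orientable :: "'a graph \<Rightarrow> bool" where
  "one_perfectly_orientable G \<longleftrightarrow> (\<exists>D. one_perfect_orientation G D)"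

definition edgeless :: "'a graph \<Rightarrow> bool" where
  "edgeless G \<longleftrightarrow> edges G = {}"

definition complete :: "'a graph \<Rightarrow> bool" where
  "complete G \<longleftrightarrow> clique G (verts G)"

definition connected_in :: "'a graph \<Rightarrow> 'a \<Rightarrow> 'a \<Rightarrow> bool" where
  "connected_in G u v \<longleftrightarrow> (u, v) \<in> {(x, y). adj G x y}\<^sup>*"

definition components_complete :: "'a graph \<Rightarrow> bool" where
  "components_complete G \<longleftrightarrow>
     (\<forall>u\<in>verts G. \<forall>v\<in>verts G. connected_in G u v \<and> u \<noteq> v \<longrightarrow> adj G u v)"

definition complement :: "'a graph \<Rightarrow> 'a graph" where
  "complement G = (verts G, {{u, v} | u v. u \<in> verts G \<and> v \<in> verts G \<and> u \<noteq> v \<and> \<not> adj G u v})"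

definition bipartite :: "'a graph \<Rightarrow> bool" where
  "bipartite G \<longleftrightarrow> (\<exists>A B. A \<inter> B = {} \<and> A \<union> B = verts G \<and>
     (\<forall>u v. adj G u v \<longrightarrow> (u \<in> A \<and> v \<in> B) \<or> (u \<in> B \<and> v \<in> A)))"

definition co_bipartite :: "'a graph \<Rightarrow> bool" where
  "co_bipartite G \<longleftrightarrow> bipartite (complement G)"

definition lex_product :: "'a graph \<Rightarrow> 'b graph \<Rightarrow> ('a \<times> 'b) graph" where
  "lex_product G H = (verts G \<times> verts H,
     {{(u, v), (u', v')} | u v u' v'. u \<in> verts G \<and> u' \<in> verts G \<and> v \<in> verts H \<and> v' \<in> verts H \<and>
        (adj G u u' \<or> (u = u' \<and> adj H v v'))})"

end

theory Submission imports Defs begin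

lemma adj_sym: "adj G u v \<Longrightarrow> adj G v u"
  by (auto simp: adj_def insert_commute)

lemma adj_irr: "\<not> adj G u u"
  by (auto simp: adj_def)

lemma adj_verts: "graph G \<Longrightarrow> adj G u v \<Longrightarrow> u \<in> verts G \<and> v \<in> verts G"
  unfolding graph_def adj_def by (force simp: doubleton_eq_iff)

lemma verts_lex: "verts (lex_product G H) = verts G \<times> verts H"
  by (simp add: lex_product_def verts_def)

lemma lex_adj: "adj (lex_product G H) (u,v) (u',v') \<longleftrightarrow>
   u \<in> verts G \<and> u' \<in> verts G \<and> v \<in> verts H \<and> v' \<in> verts H \<and>
   (adj G u u' \<or> (u = u' \<and> adj H v v'))"
proof
  assume "adj (lex_product G H) (u,v) (u',v')"
  then show "u \<in> verts G \<and> u' \<in> verts G \<and> v \<in> verts H \<and> v' \<in> verts H \<and>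
   (adj G u u' \<or> (u = u' \<and> adj H v v'))"
    unfolding adj_def lex_product_def edges_def
    by (auto simp: doubleton_eq_iff insert_commute verts_def)
next
  assume "u \<in> verts G \<and> u' \<in> verts G \<and> v \<in> verts H \<and> v' \<in> verts H \<and>
   (adj G u u' \<or> (u = u' \<and> adj H v v'))"
  then show "adj (lex_product G H) (u,v) (u',v')"
    unfolding adj_def lex_product_def edges_def
    by (auto simp: verts_def)
qed

lemma lex_adj': "adj (lex_product G H) x y \<longleftrightarrow>
   fst x \<in> verts G \<and> fst y \<in> verts G \<and> snd x \<in> verts H \<and> snd y \<in> verts H \<and>
   (adj G (fst x) (fst y) \<or> (fst x = fst y \<and> adj H (snd x) (snd y)))"
  using lex_adj[of G H "fst x" "snd x" "fst y" "snd y"] by simp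

lemma ex_orientation: "graph G \<Longrightarrow> \<exists>R. orientation G R"
proof -
  assume g: "graph G"
  then obtain f :: "_ \<Rightarrow> nat" and n where f: "inj_on f (verts G)"
    using finite_imp_inj_to_nat_seg unfolding graph_def by metis
  let ?O = "{(x,y). adj G x y \<and> f x < f y}"
  have "orientation G ?O"
    unfolding orientation_def
  proof (intro conjI allI impI)
    fix u v assume a: "adj G u v"
    then have "f u \<noteq> f v" using f adj_verts[OF g a] adj_irr[of G u]
      by (metis inj_on_def)
    then show "((u, v) \<in> ?O) = ((v, u) \<notin> ?O)" using a adj_sym[OF a] by auto
  qed auto
  then show ?thesis by blast
qed


lemma orientation_arc: "orientation G D \<Longrightarrow> (x,y) \<in> D \<Longrightarrow> adj G x y"
  unfolding orientation_def by auto

lemma orientation_one: "orientation G D \<Longrightarrow> adj G x y \<Longrightarrow> ((x,y) \<in> D \<longleftrightarrow> (y,x) \<notin> D)"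
  unfolding orientation_def by auto

lemma lex_orient:
  assumes gG: "graph G" and gH: "graph H" and oG: "orientation G OG" and oH: "orientation H OH"
  defines "D \<equiv> {(x,y). adj (lex_product G H) x y \<and>
     ((fst x, fst y) \<in> OG \<or> (fst x = fst y \<and> (snd x, snd y) \<in> OH))}"
  shows "orientation (lex_product G H) D"
proof -
  have "\<forall>x y. adj (lex_product G H) x y \<longrightarrow> ((x,y) \<in> D \<longleftrightarrow> (y,x) \<notin> D)"
  proof (intro allI impI)
    fix x y assume a: "adj (lex_product G H) x y"
    then have a2: "adj (lex_product G H) y x" by (rule adj_sym)
    from a have "adj G (fst x) (fst y) \<or> (fst x = fst y \<and> adj H (snd x) (snd y))"
      by (simp add: lex_adj')
    then show "((x,y) \<in> D \<longleftrightarrow> (y,x) \<notin> D)"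
    proof
      assume g: "adj G (fst x) (fst y)"
      then have "fst x \<noteq> fst y" using adj_irr by metis
      then show ?thesis using orientation_one[OF oG g] a a2 unfolding D_def by auto
    next
      assume h: "fst x = fst y \<and> adj H (snd x) (snd y)"
      then have "(fst x, fst y) \<notin> OG" "(fst y, fst x) \<notin> OG"
        using orientation_arc[OF oG] adj_irr by metis+
      then show ?thesis using orientation_one[OF oH, of "snd x" "snd y"] h a a2 unfolding D_def by auto
    qed
  qed
  then show ?thesis unfolding orientation_def D_def by auto
qed

lemma out_lex:
  "out_nbhd {(x,y). adj (lex_product G H) x y \<and>
     ((fst x, fst y) \<in> OG \<or> (fst x = fst y \<and> (snd x, snd y) \<in> OH))} (u,v)
   \<subseteq> {(u',w). (u,u') \<in> OG \<and> w \<in> verts H} \<union> {(u,w)| w. (v,w) \<in> OH}"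
  unfolding out_nbhd_def by (auto simp: lex_adj')

lemma out_verts: "orientation (lex_product G H) D \<Longrightarrow> out_nbhd D x \<subseteq> verts (lex_product G H)"
proof
  fix y assume "orientation (lex_product G H) D" "y \<in> out_nbhd D x"
  then have "adj (lex_product G H) x y" unfolding out_nbhd_def using orientation_arc by fastforce
  then show "y \<in> verts (lex_product G H)" by (simp add: lex_adj' verts_lex mem_Times_iff)
qed

lemma clique_sub: "clique G S \<Longrightarrow> T \<subseteq> S \<Longrightarrow> clique G T"
  unfolding clique_def by blast

lemma case_i:
  assumes gG: "graph G" and gH: "graph H" and e: "edgeless G" and p: "one_perfectly_orientable H"
  shows "one_perfectly_orientable (lex_product G H)"
proof -
  obtain OH where oH: "one_perfect_orientation H OH" using p unfolding one_perfectly_orientable_def by blast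
  have oG: "orientation G {}" using e unfolding orientation_def edgeless_def adj_def by auto
  define D where "D \<equiv> {(x,y). adj (lex_product G H) x y \<and>
     ((fst x, fst y) \<in> {} \<or> (fst x = fst y \<and> (snd x, snd y) \<in> OH))}"
  have o: "orientation (lex_product G H) D" unfolding D_def
    by (rule lex_orient[OF gG gH oG]) (use oH in \<open>simp add: one_perfect_orientation_def\<close>)
  have "clique (lex_product G H) (out_nbhd D x)" if x: "x \<in> verts (lex_product G H)" for x
  proof -
    obtain u v where xuv: "x = (u,v)" by force
    have v: "v \<in> verts H" using x xuv by (simp add: verts_lex)
    have cl: "clique H (out_nbhd OH v)" using oH v unfolding one_perfect_orientation_def by blast
    have sub: "out_nbhd D x \<subseteq> {(u,w)| w. (v,w) \<in> OH}"
      using out_lex[of G H "{}" OH u v] xuv unfolding D_def by auto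
    show ?thesis unfolding clique_def
    proof (intro conjI ballI impI)
      show "out_nbhd D x \<subseteq> verts (lex_product G H)"
        using o by (rule out_verts)
    next
      fix y z assume y: "y \<in> out_nbhd D x" and z: "z \<in> out_nbhd D x" and yz: "y \<noteq> z"
      obtain w1 w2 where w: "y = (u,w1)" "z = (u,w2)" "(v,w1) \<in> OH" "(v,w2) \<in> OH"
        using sub y z by blast
      have "adj H w1 w2" using cl w yz unfolding clique_def out_nbhd_def by auto
      moreover have "u \<in> verts G" using x xuv by (simp add: verts_lex)
      ultimately show "adj (lex_product G H) y z" using w adj_verts[OF gH] by (auto simp: lex_adj)
    qed
  qed
  then show ?thesis using o unfolding one_perfectly_orientable_def one_perfect_orientation_def by blast
qed

lemma case_ii:
  assumes gG: "graph G" and gH: "graph H" and p: "one_perfectly_orientable G" and c: "complete H"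
  shows "one_perfectly_orientable (lex_product G H)"
proof -
  obtain OG where oG: "one_perfect_orientation G OG" using p unfolding one_perfectly_orientable_def by blast
  obtain OH where oH: "orientation H OH" using ex_orientation[OF gH] by blast
  define D where "D \<equiv> {(x,y). adj (lex_product G H) x y \<and>
     ((fst x, fst y) \<in> OG \<or> (fst x = fst y \<and> (snd x, snd y) \<in> OH))}"
  have oG': "orientation G OG" using oG by (simp add: one_perfect_orientation_def)
  have o: "orientation (lex_product G H) D" unfolding D_def
    by (rule lex_orient[OF gG gH oG' oH])
  have "clique (lex_product G H) (out_nbhd D x)" if x: "x \<in> verts (lex_product G H)" for x
  proof -
    obtain u v where xuv: "x = (u,v)" by force
    have u: "u \<in> verts G" using x xuv by (simp add: verts_lex)
    have cl: "clique G (out_nbhd OG u)" using oG u unfolding one_perfect_orientation_def by blast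
    have sub: "out_nbhd D x \<subseteq> {(u',w). (u,u') \<in> OG \<and> w \<in> verts H} \<union> {(u,w)| w. (v,w) \<in> OH}"
      using out_lex[of G H OG OH u v] xuv unfolding D_def by auto
    show ?thesis unfolding clique_def
    proof (intro conjI ballI impI)
      show "out_nbhd D x \<subseteq> verts (lex_product G H)"
        using o by (rule out_verts)
    next
      fix y z assume y: "y \<in> out_nbhd D x" and z: "z \<in> out_nbhd D x" and yz: "y \<noteq> z"
      have yv: "y \<in> verts (lex_product G H)" "z \<in> verts (lex_product G H)"
        using y z out_verts[OF o, of x] by blast+
      have yy: "fst y = u \<or> (u, fst y) \<in> OG" "fst z = u \<or> (u, fst z) \<in> OG"
        using sub y z by auto
      show "adj (lex_product G H) y z"
      proof (cases "fst y = fst z")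
        case True
        then have "snd y \<noteq> snd z" using yz by (simp add: prod_eq_iff)
        then have "adj H (snd y) (snd z)" using c yv unfolding complete_def clique_def
          by (auto simp: verts_lex)
        then show ?thesis using True yv by (simp add: lex_adj' verts_lex mem_Times_iff)
      next
        case False
        have "adj G (fst y) (fst z)"
        proof -
          { assume "fst y = u" then have ?thesis using yy False orientation_arc[OF oG'] by auto }
          moreover
          { assume "fst z = u" then have ?thesis using yy False orientation_arc[OF oG'] adj_sym by metis }
          moreover
          { assume "(u, fst y) \<in> OG" "(u, fst z) \<in> OG"
            then have ?thesis using cl False unfolding clique_def out_nbhd_def by auto }
          ultimately show ?thesis using yy by blast
        qed
        then show ?thesis using yv by (simp add: lex_adj' verts_lex mem_Times_iff)
      qed
    qed
  qed
  then show ?thesis using o unfolding one_perfectly_orientable_def one_perfect_orientation_def by blast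
qed


lemma compl_adj: "adj (complement H) v w \<longleftrightarrow> v \<in> verts H \<and> w \<in> verts H \<and> v \<noteq> w \<and> \<not> adj H v w"
proof
  assume "adj (complement H) v w"
  then show "v \<in> verts H \<and> w \<in> verts H \<and> v \<noteq> w \<and> \<not> adj H v w"
    unfolding adj_def complement_def edges_def
    by (auto simp: doubleton_eq_iff insert_commute verts_def adj_def)
next
  assume "v \<in> verts H \<and> w \<in> verts H \<and> v \<noteq> w \<and> \<not> adj H v w"
  then show "adj (complement H) v w"
    unfolding adj_def complement_def edges_def by (auto simp: verts_def adj_def)
qed

lemma cobip_split:
  assumes "co_bipartite H"
  shows "\<exists>A. \<forall>v\<in>verts H. \<forall>w\<in>verts H. v \<noteq> w \<and> (v \<in> A \<longleftrightarrow> w \<in> A) \<longrightarrow> adj H v w"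
proof -
  obtain A B where ab: "A \<inter> B = {}" "A \<union> B = verts (complement H)"
     "\<forall>u v. adj (complement H) u v \<longrightarrow> (u \<in> A \<and> v \<in> B) \<or> (u \<in> B \<and> v \<in> A)"
    using assms unfolding co_bipartite_def bipartite_def by blast
  have vc: "verts (complement H) = verts H" by (simp add: complement_def verts_def)
  show ?thesis
  proof (rule exI[of _ A], intro ballI impI)
    fix v w assume v: "v \<in> verts H" and w: "w \<in> verts H" and vw: "v \<noteq> w \<and> (v \<in> A \<longleftrightarrow> w \<in> A)"
    show "adj H v w"
    proof (rule ccontr)
      assume "\<not> adj H v w"
      then have "adj (complement H) v w" using v w vw by (simp add: compl_adj)
      then show False using ab vc v w vw by blast
    qed
  qed
qed

lemma cc_adj:
  assumes g: "graph G" and cc: "components_complete G" and a: "adj G u a" "adj G u b" and ab: "a \<noteq> b"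
  shows "adj G a b"
proof -
  have "(a,u) \<in> {(x, y). adj G x y}\<^sup>*" using adj_sym[OF a(1)] by blast
  moreover have "(u,b) \<in> {(x, y). adj G x y}\<^sup>*" using a(2) by blast
  ultimately have "connected_in G a b" unfolding connected_in_def by simp
  then show ?thesis using cc ab adj_verts[OF g a(1)] adj_verts[OF g a(2)]
    unfolding components_complete_def by blast
qed

lemma case_iii:
  assumes gG: "graph G" and gH: "graph H" and cc: "components_complete G"
    and cb: "co_bipartite H" and p: "one_perfectly_orientable H"
  shows "one_perfectly_orientable (lex_product G H)"
proof -
  obtain OH where oH1: "one_perfect_orientation H OH" using p unfolding one_perfectly_orientable_def by blast
  then have oH: "orientation H OH" by (simp add: one_perfect_orientation_def)
  obtain OG where oG: "orientation G OG" using ex_orientation[OF gG] by blast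
  from cobip_split[OF cb] obtain A where A0: "\<forall>v\<in>verts H. \<forall>w\<in>verts H. v \<noteq> w \<and> (v \<in> A \<longleftrightarrow> w \<in> A) \<longrightarrow> adj H v w"
    by (elim exE)
  note A = A0[rule_format]
  define D where "D \<equiv> {(x,y). adj (lex_product G H) x y \<and>
     ((fst x = fst y \<and> (snd x, snd y) \<in> OH) \<or>
      ((fst x, fst y) \<in> OG \<and> (snd x \<in> A \<longleftrightarrow> snd y \<in> A)) \<or>
      ((fst y, fst x) \<in> OG \<and> (snd x \<in> A \<longleftrightarrow> snd y \<notin> A)))}"
  have Dm: "((a,b),(a',b')) \<in> D \<longleftrightarrow> adj (lex_product G H) (a,b) (a',b') \<and>
     ((a = a' \<and> (b, b') \<in> OH) \<or>
      ((a, a') \<in> OG \<and> (b \<in> A \<longleftrightarrow> b' \<in> A)) \<or>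
      ((a', a) \<in> OG \<and> (b \<in> A \<longleftrightarrow> b' \<notin> A)))" for a b a' b'
    by (simp add: D_def)
  have o: "orientation (lex_product G H) D"
  proof -
    have "((a,b),(a',b')) \<in> D \<longleftrightarrow> ((a',b'),(a,b)) \<notin> D"
      if a: "adj (lex_product G H) (a,b) (a',b')" for a b a' b'
    proof -
      have a2: "adj (lex_product G H) (a',b') (a,b)" using a by (rule adj_sym)
      from a have "adj G a a' \<or> (a = a' \<and> adj H b b')"
        by (simp add: lex_adj)
      then show ?thesis
      proof
        assume g: "adj G a a'"
        then have ne: "a \<noteq> a'" using adj_irr by metis
        show ?thesis
        proof (cases "(a,a') \<in> OG")
          case True
          then have "(a',a) \<notin> OG" using orientation_one[OF oG g] by simp
          then show ?thesis using True ne a a2 Dm by (cases "b \<in> A"; cases "b' \<in> A"; simp)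
        next
          case False
          then have "(a',a) \<in> OG" using orientation_one[OF oG g] by simp
          then show ?thesis using False ne a a2 Dm by (cases "b \<in> A"; cases "b' \<in> A"; simp)
        qed
      next
        assume h: "a = a' \<and> adj H b b'"
        then have "(a, a') \<notin> OG" "(a', a) \<notin> OG"
          using orientation_arc[OF oG] adj_irr by metis+
        then show ?thesis using orientation_one[OF oH, of b b'] h a a2 Dm by simp
      qed
    qed
    then have "\<forall>x y. adj (lex_product G H) x y \<longrightarrow> ((x,y) \<in> D \<longleftrightarrow> (y,x) \<notin> D)" by force
    moreover have "\<forall>(x,y)\<in>D. adj (lex_product G H) x y" unfolding D_def by blast
    ultimately show ?thesis unfolding orientation_def by blast
  qed
  have "clique (lex_product G H) (out_nbhd D x)" if x: "x \<in> verts (lex_product G H)" for x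
  proof -
    obtain u v where xuv: "x = (u,v)" by force
    have cl: "clique H (out_nbhd OH v)" using oH1 x xuv unfolding one_perfect_orientation_def
      by (auto simp: verts_lex)
    show ?thesis unfolding clique_def
    proof (intro conjI ballI impI)
      show "out_nbhd D x \<subseteq> verts (lex_product G H)"
        using o by (rule out_verts)
    next
      fix y z assume y: "y \<in> out_nbhd D x" and z: "z \<in> out_nbhd D x" and yz: "y \<noteq> z"
      obtain p q where yp: "y = (p,q)" by force
      obtain p' q' where zp: "z = (p',q')" by force
      have yv: "p \<in> verts G" "q \<in> verts H" "p' \<in> verts G" "q' \<in> verts H"
        using y z out_verts[OF o, of x] yp zp by (auto simp: verts_lex)
      have yD: "((u,v),(p,q)) \<in> D" and zD: "((u,v),(p',q')) \<in> D" using y z xuv yp zp by (auto simp: out_nbhd_def)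
      have fy: "p = u \<or> adj G u p" and fz: "p' = u \<or> adj G u p'"
        using yD zD unfolding Dm by (auto simp: lex_adj)
      have "adj G p p' \<or> (p = p' \<and> adj H q q')"
      proof (cases "p = p'")
        case True
        then have ne: "q \<noteq> q'" using yz yp zp by simp
        have "adj H q q'"
        proof (cases "p = u")
          case True
          then have pu: "p' = u" using \<open>p = p'\<close> by simp
          have n1: "(u,u) \<notin> OG" using orientation_arc[OF oG] adj_irr by metis
          have "(v, q) \<in> OH" using yD True n1 Dm by simp
          moreover have "(v, q') \<in> OH" using zD pu n1 Dm by simp
          ultimately show ?thesis using cl ne unfolding clique_def out_nbhd_def by auto
        next
          case False
          then have g: "adj G u p" using fy by simp
          have "(q \<in> A \<longleftrightarrow> q' \<in> A)"
          proof (cases "(u, p) \<in> OG")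
            case T: True
            then have "(p, u) \<notin> OG" using orientation_one[OF oG g] by simp
            then show ?thesis using yD zD T False \<open>p = p'\<close> Dm by simp
          next
            case F: False
            then have "(p, u) \<in> OG" using orientation_one[OF oG g] by simp
            then show ?thesis using yD zD F False \<open>p = p'\<close> Dm by simp
          qed
          then show ?thesis using A[OF yv(2) yv(4)] ne by simp
        qed
        then show ?thesis using True by simp
      next
        case False
        have "adj G p p'"
          using fy fz False cc_adj[OF gG cc] adj_sym by metis
        then show ?thesis by simp
      qed
      then show "adj (lex_product G H) y z" using yv yp zp by (simp add: lex_adj)
    qed
  qed
  then show ?thesis using o unfolding one_perfectly_orientable_def one_perfect_orientation_def by blast
qed


lemma out_adj: "one_perfect_orientation (lex_product G H) D \<Longrightarrow> (x,y) \<in> D \<Longrightarrow> (x,z) \<in> D \<Longrightarrow> y \<noteq> z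
  \<Longrightarrow> adj (lex_product G H) y z"
proof -
  assume o: "one_perfect_orientation (lex_product G H) D" and xy: "(x,y) \<in> D" and xz: "(x,z) \<in> D" and ne: "y \<noteq> z"
  have "adj (lex_product G H) x y" using o xy orientation_arc unfolding one_perfect_orientation_def by metis
  then have "x \<in> verts (lex_product G H)" by (simp add: lex_adj' verts_lex mem_Times_iff)
  then have "clique (lex_product G H) (out_nbhd D x)" using o unfolding one_perfect_orientation_def by blast
  then show ?thesis using xy xz ne unfolding clique_def out_nbhd_def by blast
qed

lemma induced_H:
  assumes gH: "graph H" and o: "one_perfect_orientation (lex_product G H) D" and u0: "u0 \<in> verts G"
  shows "one_perfectly_orientable H"
proof -
  have oo: "orientation (lex_product G H) D" using o by (simp add: one_perfect_orientation_def)
  define DH where "DH = {(v,w). ((u0,v),(u0,w)) \<in> D}"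
  have arc: "adj H v w" if "(v,w) \<in> DH" for v w
  proof -
    have "adj (lex_product G H) (u0,v) (u0,w)" using that oo orientation_arc unfolding DH_def by fastforce
    then show ?thesis by (simp add: lex_adj adj_irr)
  qed
  have oH: "orientation H DH" unfolding orientation_def
  proof (intro conjI allI impI)
    show "\<forall>(v,w)\<in>DH. adj H v w" using arc by blast
  next
    fix v w assume a: "adj H v w"
    then have "adj (lex_product G H) (u0,v) (u0,w)" using u0 adj_verts[OF gH a] by (simp add: lex_adj)
    then show "((v, w) \<in> DH) = ((w, v) \<notin> DH)" using orientation_one[OF oo] unfolding DH_def by simp
  qed
  have "clique H (out_nbhd DH v)" if v: "v \<in> verts H" for v
    unfolding clique_def
  proof (intro conjI ballI impI)
    show "out_nbhd DH v \<subseteq> verts H" using arc adj_verts[OF gH] unfolding out_nbhd_def by blast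
  next
    fix y z assume "y \<in> out_nbhd DH v" "z \<in> out_nbhd DH v" "y \<noteq> z"
    then have "adj (lex_product G H) (u0,y) (u0,z)"
      using out_adj[OF o] unfolding out_nbhd_def DH_def by auto
    then show "adj H y z" by (simp add: lex_adj adj_irr)
  qed
  then show ?thesis using oH unfolding one_perfectly_orientable_def one_perfect_orientation_def by blast
qed

lemma induced_G:
  assumes gG: "graph G" and o: "one_perfect_orientation (lex_product G H) D" and v0: "v0 \<in> verts H"
  shows "one_perfectly_orientable G"
proof -
  have oo: "orientation (lex_product G H) D" using o by (simp add: one_perfect_orientation_def)
  define DG where "DG = {(v,w). ((v,v0),(w,v0)) \<in> D}"
  have arc: "adj G v w" if "(v,w) \<in> DG" for v w
  proof -
    have "adj (lex_product G H) (v,v0) (w,v0)" using that oo orientation_arc unfolding DG_def by fastforce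
    then show ?thesis by (simp add: lex_adj adj_irr)
  qed
  have oG: "orientation G DG" unfolding orientation_def
  proof (intro conjI allI impI)
    show "\<forall>(v,w)\<in>DG. adj G v w" using arc by blast
  next
    fix v w assume a: "adj G v w"
    then have "adj (lex_product G H) (v,v0) (w,v0)" using v0 adj_verts[OF gG a] by (simp add: lex_adj)
    then show "((v, w) \<in> DG) = ((w, v) \<notin> DG)" using orientation_one[OF oo] unfolding DG_def by simp
  qed
  have "clique G (out_nbhd DG v)" if v: "v \<in> verts G" for v
    unfolding clique_def
  proof (intro conjI ballI impI)
    show "out_nbhd DG v \<subseteq> verts G" using arc adj_verts[OF gG] unfolding out_nbhd_def by blast
  next
    fix y z assume "y \<in> out_nbhd DG v" "z \<in> out_nbhd DG v" "y \<noteq> z"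
    then have "adj (lex_product G H) (y,v0) (z,v0)"
      using out_adj[OF o] unfolding out_nbhd_def DG_def by auto
    then show "adj G y z" by (simp add: lex_adj adj_irr)
  qed
  then show ?thesis using oG unfolding one_perfectly_orientable_def one_perfect_orientation_def by blast
qed


lemma cobip_from:
  assumes gG: "graph G" and gH: "graph H" and o: "one_perfect_orientation (lex_product G H) D"
    and uu: "adj G u u'" and a: "a \<in> verts H" and b: "b \<in> verts H" and ab: "a \<noteq> b" and nab: "\<not> adj H a b"
  shows "co_bipartite H"
proof -
  have oo: "orientation (lex_product G H) D" using o by (simp add: one_perfect_orientation_def)
  have u: "u \<in> verts G" "u' \<in> verts G" using adj_verts[OF gG uu] by auto
  define SA where "SA = {w \<in> verts H. ((u,a),(u',w)) \<in> D}"
  define B where "B = verts H - SA"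
  have e: "adj (lex_product G H) (u,c) (u',w)" if "c \<in> verts H" "w \<in> verts H" for c w
    using that u uu by (simp add: lex_adj)
  have inB: "((u,b),(u',w)) \<in> D" if w: "w \<in> B" for w
  proof (rule ccontr)
    assume n: "((u,b),(u',w)) \<notin> D"
    have wv: "w \<in> verts H" "((u,a),(u',w)) \<notin> D" using w unfolding B_def SA_def by auto
    have 1: "((u',w),(u,a)) \<in> D" using orientation_one[OF oo e[OF a wv(1)]] wv by simp
    have 2: "((u',w),(u,b)) \<in> D" using orientation_one[OF oo e[OF b wv(1)]] n by simp
    have "adj (lex_product G H) (u,a) (u,b)" using out_adj[OF o 1 2] ab by simp
    then show False using nab by (simp add: lex_adj adj_irr)
  qed
  have vc: "verts (complement H) = verts H" by (simp add: complement_def verts_def)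
  show ?thesis unfolding co_bipartite_def bipartite_def
  proof (rule exI[of _ SA], rule exI[of _ B], intro conjI allI impI)
    show "SA \<inter> B = {}" "SA \<union> B = verts (complement H)" using vc unfolding B_def SA_def by auto
  next
    fix v w assume c: "adj (complement H) v w"
    then have c': "v \<in> verts H" "w \<in> verts H" "v \<noteq> w" "\<not> adj H v w" by (auto simp: compl_adj)
    have n1: "\<not> (v \<in> SA \<and> w \<in> SA)"
    proof
      assume "v \<in> SA \<and> w \<in> SA"
      then have "adj (lex_product G H) (u',v) (u',w)" using out_adj[OF o] c' unfolding SA_def by auto
      then show False using c' by (simp add: lex_adj adj_irr)
    qed
    have n2: "\<not> (v \<in> B \<and> w \<in> B)"
    proof
      assume "v \<in> B \<and> w \<in> B"
      then have "adj (lex_product G H) (u',v) (u',w)" using out_adj[OF o inB inB] c' by auto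
      then show False using c' by (simp add: lex_adj adj_irr)
    qed
    show "v \<in> SA \<and> w \<in> B \<or> v \<in> B \<and> w \<in> SA" using n1 n2 c' unfolding B_def by blast
  qed
qed

lemma p3_free:
  assumes gG: "graph G" and gH: "graph H" and o: "one_perfect_orientation (lex_product G H) D"
    and a: "a \<in> verts H" and b: "b \<in> verts H" and ab: "a \<noteq> b" and nab: "\<not> adj H a b"
    and xy: "adj G x y" and yz: "adj G y z" and xz: "x \<noteq> z"
  shows "adj G x z"
proof (rule ccontr)
  assume nxz: "\<not> adj G x z"
  have oo: "orientation (lex_product G H) D" using o by (simp add: one_perfect_orientation_def)
  have V: "x \<in> verts G" "y \<in> verts G" "z \<in> verts G" using adj_verts[OF gG xy] adj_verts[OF gG yz] by auto
  have yx: "adj G y x" using xy by (rule adj_sym)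
  have nab': "\<not> adj H b a" using nab adj_sym by metis
  have ya_yb: "\<not> adj (lex_product G H) (y,a) (y,b)" using nab by (simp add: lex_adj adj_irr)
  have cover: "((y,a),p) \<in> D \<or> ((y,b),p) \<in> D" if "adj G y (fst p)" "snd p \<in> verts H" for p
  proof (rule ccontr)
    assume "\<not> (((y,a),p) \<in> D \<or> ((y,b),p) \<in> D)"
    moreover have "adj (lex_product G H) (y,a) p" "adj (lex_product G H) (y,b) p"
      using that V a b adj_verts[OF gG that(1)] by (simp_all add: lex_adj')
    ultimately have "(p,(y,a)) \<in> D" "(p,(y,b)) \<in> D" using orientation_one[OF oo] by blast+
    then show False using out_adj[OF o] ya_yb ab by blast
  qed
  have c1: "((y,a),(x,a)) \<in> D \<or> ((y,b),(x,a)) \<in> D" using cover[of "(x,a)"] yx a by simp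
  have c2: "((y,a),(x,b)) \<in> D \<or> ((y,b),(x,b)) \<in> D" using cover[of "(x,b)"] yx b by simp
  have c3: "((y,a),(z,a)) \<in> D \<or> ((y,b),(z,a)) \<in> D" using cover[of "(z,a)"] yz a by simp
  have n12: "\<not> adj (lex_product G H) (x,a) (x,b)" using nab by (simp add: lex_adj adj_irr)
  have n13: "\<not> adj (lex_product G H) (x,a) (z,a)" using nxz xz by (simp add: lex_adj)
  have n23: "\<not> adj (lex_product G H) (x,b) (z,a)" using nxz xz by (simp add: lex_adj)
  have d: "(x,a) \<noteq> (x,b)" "(x,a) \<noteq> (z,a)" "(x,b) \<noteq> (z,a)" using ab xz by auto
  show False using c1 c2 c3 n12 n13 n23 d out_adj[OF o] by metis
qed

lemma cc_from:
  assumes gG: "graph G" and gH: "graph H" and o: "one_perfect_orientation (lex_product G H) D"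
    and a: "a \<in> verts H" and b: "b \<in> verts H" and ab: "a \<noteq> b" and nab: "\<not> adj H a b"
  shows "components_complete G"
  unfolding components_complete_def
proof (intro ballI impI)
  fix u v assume "u \<in> verts G" "v \<in> verts G" and c: "connected_in G u v \<and> u \<noteq> v"
  have "(u,v) \<in> {(x, y). adj G x y}\<^sup>*" using c unfolding connected_in_def by simp
  then have "v = u \<or> adj G u v"
  proof (induction rule: rtrancl_induct)
    case base then show ?case by simp
  next
    case (step y z)
    then have yz: "adj G y z" by simp
    show ?case
    proof (cases "y = u")
      case True then show ?thesis using yz by simp
    next
      case False
      then have uy: "adj G u y" using step.IH by simp
      show ?thesis
      proof (cases "z = u")
        case True then show ?thesis by simp
      next
        case False
        then show ?thesis using p3_free[OF gG gH o a b ab nab uy yz] by auto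
      qed
    qed
  qed
  then show "adj G u v" using c by auto
qed


theorem theorem8:
  fixes G :: "'a graph" and H :: "'b graph"
  assumes "graph G" and "graph H"
    and "card (verts G) \<ge> 2" and "card (verts H) \<ge> 2"
  shows "one_perfectly_orientable (lex_product G H) \<longleftrightarrow>
           (edgeless G \<and> one_perfectly_orientable H) \<or>
           (one_perfectly_orientable G \<and> complete H) \<or>
           (components_complete G \<and> co_bipartite H \<and> one_perfectly_orientable H)"
proof
  assume "one_perfectly_orientable (lex_product G H)"
  then obtain D where o: "one_perfect_orientation (lex_product G H) D"
    unfolding one_perfectly_orientable_def by blast
  have "verts G \<noteq> {}" "verts H \<noteq> {}" using assms(3,4) by auto
  then obtain u0 v0 where u0: "u0 \<in> verts G" and v0: "v0 \<in> verts H" by blast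
  have pH: "one_perfectly_orientable H" using induced_H[OF assms(2) o u0] .
  have pG: "one_perfectly_orientable G" using induced_G[OF assms(1) o v0] .
  show "(edgeless G \<and> one_perfectly_orientable H) \<or>
           (one_perfectly_orientable G \<and> complete H) \<or>
           (components_complete G \<and> co_bipartite H \<and> one_perfectly_orientable H)"
  proof (cases "edgeless G")
    case True then show ?thesis using pH by blast
  next
    case ne: False
    show ?thesis
    proof (cases "complete H")
      case True then show ?thesis using pG by blast
    next
      case False
      then obtain a b where ab: "a \<in> verts H" "b \<in> verts H" "a \<noteq> b" "\<not> adj H a b"
        unfolding complete_def clique_def by blast
      obtain e where "e \<in> edges G" using ne unfolding edgeless_def by blast
      then obtain u u' where "e = {u,u'}" "u \<noteq> u'" using assms(1) unfolding graph_def by blast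
      then have uu: "adj G u u'" using \<open>e \<in> edges G\<close> unfolding adj_def by simp
      have "co_bipartite H" using cobip_from[OF assms(1,2) o uu ab] .
      moreover have "components_complete G" using cc_from[OF assms(1,2) o ab] .
      ultimately show ?thesis using pH by blast
    qed
  qed
next
  assume "(edgeless G \<and> one_perfectly_orientable H) \<or>
           (one_perfectly_orientable G \<and> complete H) \<or>
           (components_complete G \<and> co_bipartite H \<and> one_perfectly_orientable H)"
  then show "one_perfectly_orientable (lex_product G H)"
    using case_i[OF assms(1,2)] case_ii[OF assms(1,2)] case_iii[OF assms(1,2)] by blast
qed

end
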